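(* Let $0\le\beta\le1$. Then $C_\beta[f]\in\mathcal{C}$ for every $f\in\mathcal{C}$.
   Context: $\mathbb{D}$ is the open unit disk; $\mathcal{A}$ the class of analytic $f$ on $\mathbb{D}$ with $f(0)=0$, $f'(0)=1$. $\mathcal{K}$ is the class of $f\in\mathcal{A}$ with $f'\neq0$ and $\mathrm{Re}\,(1+zf''(z)/f'(z))>0$ on $\mathbb{D}$ (normalized convex functions). $\mathcal{C}$ is the class of close-to-convex functions: $f\in\mathcal{A}$ such that $\mathrm{Re}\,(e^{i\alpha}f'(z)/g'(z))>0$ on $\mathbb{D}$ for some $g\in\mathcal{K}$ and some real $\alpha\in(-\pi/2,\pi/2)$. For $\beta\ge0$ and $f$ analytic on $\mathbb{D}$ with $f(0)=0$, $C_\beta[f](z)=\int_0^z \frac{f(w)}{w(1-w)^\beta}\,dw$ (principal branch of $(1-w)^\beta$). *)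

theory Defs
  imports "HOL-Complex_Analysis.Complex_Analysis"
begin

abbreviation unit_disk :: "complex set" where
  "unit_disk \<equiv> ball 0 1"

definition classA :: "(complex \<Rightarrow> complex) set" where
  "classA = {f. f holomorphic_on unit_disk \<and> f 0 = 0 \<and> deriv f 0 = 1}"

definition classK :: "(complex \<Rightarrow> complex) set" where
  "classK = {f. f \<in> classA \<and>
     (\<forall>z\<in>unit_disk. deriv f z \<noteq> 0 \<and>
        Re (1 + z * deriv (deriv f) z / deriv f z) > 0)}"

definition classC :: "(complex \<Rightarrow> complex) set" where
  "classC = {f. f \<in> classA \<and>
     (\<exists>g\<in>classK. \<exists>\<alpha>::real. -(pi/2) < \<alpha> \<and> \<alpha> < pi/2 \<and>
        (\<forall>z\<in>unit_disk. Re (exp (\<i> * of_real \<alpha>) * deriv f z / deriv g z) > 0))}"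

text \<open>The value of the integrand at the single point w = 0 does not affect the integral.\<close>
definition Cbeta :: "real \<Rightarrow> (complex \<Rightarrow> complex) \<Rightarrow> complex \<Rightarrow> complex" where
  "Cbeta \<beta> f z = contour_integral (linepath 0 z)
      (\<lambda>w. f w / (w * (1 - w) powr (of_real \<beta>)))"

end

theory Submission
  imports Defs
begin

lemma re_comp_deriv:
  fixes u :: "complex \<Rightarrow> complex" and \<gamma> :: "real \<Rightarrow> complex"
  assumes "(\<gamma> has_vector_derivative g') (at t)" "(u has_field_derivative u') (at (\<gamma> t))"
  shows "((\<lambda>s. Re (u (\<gamma> s))) has_real_derivative Re (g' * u')) (at t)"
proof -
  have "((u \<circ> \<gamma>) has_vector_derivative (g' * u')) (at t)"
    by (rule field_vector_diff_chain_at[OF assms])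
  then have "((\<lambda>s. Re ((u \<circ> \<gamma>) s)) has_derivative (\<lambda>x. Re (x *\<^sub>R (g' * u')))) (at t)"
    unfolding has_vector_derivative_def
    by (rule bounded_linear.has_derivative[OF bounded_linear_Re])
  then have "((\<lambda>s. Re ((u \<circ> \<gamma>) s)) has_vector_derivative Re (g' * u')) (at t)"
    unfolding has_vector_derivative_def by (simp add: mult.commute)
  then show ?thesis by (simp add: has_real_derivative_iff_has_vector_derivative o_def)
qed

lemma tang_lemma:
  fixes u :: "complex \<Rightarrow> complex"
  assumes "(u has_field_derivative u') (at z0)" "d > 0"
    "\<And>\<theta>::real. \<bar>\<theta>\<bar> < d \<Longrightarrow> Re (u (z0 * exp (\<i> * of_real \<theta>))) \<le> Re (u z0)"
  shows "Re (\<i> * z0 * u') = 0"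
proof -
  have g: "((\<lambda>\<theta>::real. z0 * exp (\<i> * of_real \<theta>)) has_vector_derivative (z0 * \<i>)) (at 0)"
    by (rule has_vector_derivative_real_field derivative_eq_intros refl | simp)+
  have "((\<lambda>s. Re (u (z0 * exp (\<i> * of_real s)))) has_real_derivative Re ((z0 * \<i>) * u')) (at 0)"
    by (rule re_comp_deriv[OF g]) (simp add: assms(1))
  then have "Re ((z0 * \<i>) * u') = 0"
    by (rule DERIV_local_max[OF _ assms(2)]) (use assms(3) in auto)
  then show ?thesis by (simp add: algebra_simps)
qed

lemma rad_lemma:
  fixes u :: "complex \<Rightarrow> complex"
  assumes "(u has_field_derivative u') (at z0)"
    "\<And>t::real. 0 \<le> t \<Longrightarrow> t < 1 \<Longrightarrow> Re (u (of_real t * z0)) \<le> Re (u z0)"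
  shows "Re (z0 * u') \<ge> 0"
proof (rule ccontr)
  assume "\<not> Re (z0 * u') \<ge> 0"
  then have neg: "Re (z0 * u') < 0" by simp
  have g: "((\<lambda>t::real. of_real t * z0) has_vector_derivative z0) (at 1)"
    by (rule has_vector_derivative_real_field derivative_eq_intros refl | simp)+
  have "((\<lambda>s. Re (u (of_real s * z0))) has_real_derivative Re (z0 * u')) (at 1)"
    by (rule re_comp_deriv[OF g]) (simp add: assms(1))
  from DERIV_neg_dec_left[OF this neg] obtain d where d: "d > 0"
    "\<And>h. h > 0 \<Longrightarrow> h < d \<Longrightarrow> Re (u (of_real 1 * z0)) < Re (u (of_real (1 - h) * z0))" by blast
  define h where "h = min (d/2) (1/2)"
  have "h > 0" "h < d" "h \<le> 1/2" using d by (auto simp: h_def)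
  with d(2)[of h] assms(2)[of "1 - h"] show False by auto
qed

lemma min_fail:
  fixes F :: "complex \<Rightarrow> real"
  assumes contF: "continuous_on (ball 0 1) F" and F0: "F 0 > 0" and z1: "z1 \<in> ball 0 1" and Fz1: "F z1 \<le> 0"
  obtains z0 where "z0 \<in> ball 0 1" "z0 \<noteq> 0" "F z0 = 0" "\<And>z. norm z \<le> norm z0 \<Longrightarrow> F z \<ge> 0"
proof -
  define S where "S = cball 0 (norm z1) \<inter> F -` {..0}"
  have sub: "cball 0 (norm z1) \<subseteq> ball 0 1" using z1 by auto
  have "closed S" unfolding S_def
    by (rule continuous_closed_preimage) (auto intro: continuous_on_subset[OF contF sub])
  then have "compact S" unfolding S_def by (meson bounded_Int bounded_cball compact_eq_bounded_closed)
  moreover have "S \<noteq> {}" using Fz1 by (auto simp: S_def)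
  ultimately obtain z0 where z0S: "z0 \<in> S" and minz: "\<And>y. y \<in> S \<Longrightarrow> norm z0 \<le> norm y"
    using continuous_attains_inf[of S norm] by (auto intro: continuous_intros)
  have z0n: "z0 \<noteq> 0" using z0S F0 by (auto simp: S_def)
  have z0b: "z0 \<in> ball 0 1" using z0S z1 by (auto simp: S_def)
  have pos: "F z > 0" if "norm z < norm z0" for z
  proof (rule ccontr)
    assume "\<not> F z > 0"
    then have "z \<in> S" using that z0S by (auto simp: S_def)
    with minz[of z] that show False by auto
  qed
  define T where "T = cball 0 (norm z0) \<inter> F -` {0..}"
  have sub2: "cball 0 (norm z0) \<subseteq> ball 0 1" using z0b by auto
  have "closed T" unfolding T_def
    by (rule continuous_closed_preimage) (auto intro: continuous_on_subset[OF contF sub2])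
  moreover have "ball 0 (norm z0) \<subseteq> T" using pos by (auto simp: T_def less_imp_le)
  ultimately have "closure (ball 0 (norm z0)) \<subseteq> T" by (rule closure_minimal[rotated])
  then have cT: "cball 0 (norm z0) \<subseteq> T" using z0n by simp
  have ge: "F z \<ge> 0" if "norm z \<le> norm z0" for z using cT that by (auto simp: T_def)
  have "F z0 = 0" using ge[of z0] z0S by (auto simp: S_def)
  then show ?thesis using that z0b z0n ge by blast
qed

lemma schwarz_radial:
  fixes w :: "complex \<Rightarrow> complex"
  assumes holw: "w holomorphic_on ball 0 1" and w0: "w 0 = 0" and z0: "z0 \<in> ball 0 1" "z0 \<noteq> 0"
   and le: "\<And>z. norm z \<le> norm z0 \<Longrightarrow> norm (w z) \<le> 1"
   and t: "0 \<le> t" "t < 1"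
  shows "norm (w (of_real t * z0)) \<le> t"
proof (rule field_le_epsilon)
  fix e :: real assume e: "e > 0"
  define r where "r = norm z0"
  have r: "r > 0" "r < 1" using z0 by (auto simp: r_def)
  define \<omega> where "\<omega> = (\<lambda>\<zeta>. w (of_real r * \<zeta>) / of_real (1 + e))"
  have holo: "\<omega> holomorphic_on ball 0 1" unfolding \<omega>_def
  proof (intro holomorphic_intros holomorphic_on_compose_gen[OF _ holw, unfolded o_def])
    show "(*) (complex_of_real r) ` ball 0 1 \<subseteq> ball 0 1"
    proof clarsimp
      fix x :: complex assume "norm x < 1"
      then have "r * norm x < 1 * 1" using r by (intro mult_strict_mono) auto
      then show "norm (complex_of_real r * x) < 1" using r by (simp add: norm_mult)
    qed
  qed (use e in \<open>auto simp: complex_eq_iff\<close>)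
  have om0: "\<omega> 0 = 0" using w0 by (simp add: \<omega>_def)
  have omb: "norm (\<omega> z) < 1" if "norm z < 1" for z
  proof -
    have "norm (of_real r * z) \<le> norm z0" using r that by (simp add: norm_mult r_def mult_left_le)
    then have "norm (w (of_real r * z)) \<le> 1" by (rule le)
    have "norm (\<omega> z) = norm (w (of_real r * z)) / (1+e)"
      unfolding \<omega>_def norm_divide norm_of_real using e by simp
    also have "\<dots> < 1" using \<open>norm (w (of_real r * z)) \<le> 1\<close> e by (simp add: divide_less_eq)
    finally show ?thesis .
  qed
  have nt: "norm (of_real (t / r) * z0) = t"
  proof -
    have "norm (of_real (t / r) * z0) = \<bar>t / r\<bar> * r" unfolding norm_mult norm_of_real r_def ..
    also have "\<dots> = t" using r t by simp
    finally show ?thesis .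
  qed
  have "norm (of_real (t / r) * z0) < 1" using nt t by simp
  then have "norm (\<omega> (of_real (t / r) * z0)) \<le> norm (of_real (t / r) * z0)"
    using Schwarz_Lemma(1)[of \<omega>, OF holo om0 omb] by blast
  moreover have "of_real r * (of_real (t / r) * z0) = of_real t * z0" using r by simp
  moreover note nt
  moreover have "norm (1 + complex_of_real e) = 1 + e"
  proof -
    have "1 + complex_of_real e = of_real (1+e)" by simp
    then show ?thesis using e by (simp only: norm_of_real)
  qed
  ultimately have "norm (w (of_real t * z0)) / (1 + e) \<le> t"
    by (simp add: \<omega>_def norm_divide)
  then have "norm (w (of_real t * z0)) \<le> t * (1 + e)" using e by (simp add: divide_le_eq)
  also have "\<dots> \<le> t + e" using t e by (simp add: algebra_simps)
  finally show "norm (w (of_real t * z0)) \<le> t + e" .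
qed

lemma jack:
  fixes w :: "complex \<Rightarrow> complex"
  assumes holw: "w holomorphic_on ball 0 1" and w0: "w 0 = 0" and z0: "z0 \<in> ball 0 1" "z0 \<noteq> 0"
   and le: "\<And>z. norm z \<le> norm z0 \<Longrightarrow> norm (w z) \<le> 1" and eq: "norm (w z0) = 1"
  shows "Im (z0 * deriv w z0 * cnj (w z0)) = 0" and "Re (z0 * deriv w z0 * cnj (w z0)) \<ge> 1"
proof -
  have dw: "(w has_field_derivative deriv w z0) (at z0)"
    using holw z0 by (auto intro: holomorphic_derivI)
  have ww: "Re (w z0 * cnj (w z0)) = 1"
  proof -
    have "w z0 * cnj (w z0) = of_real ((norm (w z0))^2)" by (metis complex_norm_square)
    then show ?thesis using eq by simp
  qed
  have reb: "Re (a * cnj (w z0)) \<le> norm a" for a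
  proof -
    have "Re (a * cnj (w z0)) \<le> norm (a * cnj (w z0))" by (rule complex_Re_le_cmod)
    also have "\<dots> = norm a" using eq by (simp add: norm_mult)
    finally show ?thesis .
  qed
  have "Re (\<i> * z0 * (deriv w z0 * cnj (w z0))) = 0"
  proof (rule tang_lemma[of "\<lambda>z. w z * cnj (w z0)" _ _ 1])
    show "((\<lambda>z. w z * cnj (w z0)) has_field_derivative deriv w z0 * cnj (w z0)) (at z0)"
      by (auto intro!: derivative_eq_intros dw)
    fix \<theta> :: real
    have "norm (z0 * exp (\<i> * of_real \<theta>)) = norm z0" by (simp add: norm_mult)
    then have "norm (w (z0 * exp (\<i> * of_real \<theta>))) \<le> 1" using le by simp
    then show "Re (w (z0 * exp (\<i> * complex_of_real \<theta>)) * cnj (w z0)) \<le> Re (w z0 * cnj (w z0))"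
      using reb[of "w (z0 * exp (\<i> * of_real \<theta>))"] ww by linarith
  qed simp
  then show "Im (z0 * deriv w z0 * cnj (w z0)) = 0" by (simp add: algebra_simps)
  have "Re (z0 * (deriv w z0 * cnj (w z0) - 1 / z0)) \<ge> 0"
  proof (rule rad_lemma[of "\<lambda>z. w z * cnj (w z0) - z / z0"])
    show "((\<lambda>z. w z * cnj (w z0) - z / z0) has_field_derivative deriv w z0 * cnj (w z0) - 1 / z0) (at z0)"
      by (auto intro!: derivative_eq_intros dw simp: z0)
    fix t :: real assume t: "0 \<le> t" "t < 1"
    have "norm (w (of_real t * z0)) \<le> t" by (rule schwarz_radial[OF holw w0 z0 le t]) 
    then have "Re (w (of_real t * z0) * cnj (w z0)) \<le> t" using reb[of "w (of_real t * z0)"] by linarith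
    then show "Re (w (of_real t * z0) * cnj (w z0) - of_real t * z0 / z0) \<le> Re (w z0 * cnj (w z0) - z0 / z0)"
      using ww z0 by simp
  qed
  then show "Re (z0 * deriv w z0 * cnj (w z0)) \<ge> 1" using z0 by (simp add: algebra_simps)
qed

definition divz :: "(complex \<Rightarrow> complex) \<Rightarrow> complex \<Rightarrow> complex" where
  "divz f z = (if z = 0 then 1 else f z / z)"

lemma divz_holo:
  assumes "f \<in> classA" shows "divz f holomorphic_on ball 0 1"
proof -
  have hf: "f holomorphic_on ball 0 1" "f 0 = 0" "deriv f 0 = 1" using assms by (auto simp: classA_def)
  have "(\<lambda>z. if z = 0 then deriv f 0 else (f z - f 0) / (z - 0)) holomorphic_on ball 0 1"
    by (rule pole_lemma[OF hf(1)]) (simp add: interior_open)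
  moreover have "(\<lambda>z. if z = 0 then deriv f 0 else (f z - f 0) / (z - 0)) = divz f"
    using hf by (auto simp: divz_def fun_eq_iff)
  ultimately show ?thesis by simp
qed

lemma divz_mult: "f 0 = 0 \<Longrightarrow> z * divz f z = f z"
  by (simp add: divz_def)

lemma holo_deriv_at:
  assumes "f holomorphic_on ball 0 1" "z \<in> ball 0 1"
  shows "(f has_field_derivative deriv f z) (at z)"
  using assms by (auto intro: holomorphic_derivI)

lemma deriv_holo_disk:
  assumes "f holomorphic_on ball 0 1" shows "deriv f holomorphic_on ball 0 1"
  using assms by (rule holomorphic_deriv) simp

lemma marx_str:
  assumes g: "g \<in> classK" and z: "z \<in> ball 0 1"
  shows "norm (divz g z / deriv g z - 1) < 1"
proof (rule ccontr)
  assume "\<not> ?thesis"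
  then have bad: "1 - norm (divz g z / deriv g z - 1) \<le> 0" by simp
  have gA: "g \<in> classA" and g'nz: "\<And>z. z \<in> ball 0 1 \<Longrightarrow> deriv g z \<noteq> 0"
    and conv: "\<And>z. z \<in> ball 0 1 \<Longrightarrow> Re (1 + z * deriv (deriv g) z / deriv g z) > 0"
    using g by (auto simp: classK_def)
  have hg: "g holomorphic_on ball 0 1" "g 0 = 0" "deriv g 0 = 1" using gA by (auto simp: classA_def)
  define q where "q = (\<lambda>z. divz g z / deriv g z)"
  have hg': "deriv g holomorphic_on ball 0 1" by (rule deriv_holo_disk[OF hg(1)])
  have hq: "q holomorphic_on ball 0 1" unfolding q_def
    by (intro holomorphic_intros divz_holo gA hg' g'nz)
  have q0: "q 0 = 1" using hg by (simp add: q_def divz_def)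
  have ident: "g x = x * deriv g x * q x" if "x \<in> ball 0 1" for x
    using g'nz[OF that] divz_mult[of g x, OF hg(2)] by (simp add: q_def)
  have dident: "1 = q x * (1 + x * deriv (deriv g) x / deriv g x) + x * deriv q x" if x: "x \<in> ball 0 1" for x
  proof -
    have d1: "((\<lambda>x. x * deriv g x * q x) has_field_derivative
        (deriv g x * q x + x * deriv (deriv g) x * q x + x * deriv g x * deriv q x)) (at x)"
      by (auto intro!: derivative_eq_intros holo_deriv_at[OF hg' x] holo_deriv_at[OF hq x] simp: algebra_simps)
    have "(g has_field_derivative (deriv g x * q x + x * deriv (deriv g) x * q x + x * deriv g x * deriv q x)) (at x)"
      by (rule has_field_derivative_transform_within_open[OF d1, of "ball 0 1"]) (use x ident in auto)
    then have "deriv g x = deriv g x * q x + x * deriv (deriv g) x * q x + x * deriv g x * deriv q x"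
      using holo_deriv_at[OF hg(1) x] DERIV_unique by blast
    then show ?thesis using g'nz[OF x] by (simp add: field_simps)
  qed
  define F where "F = (\<lambda>z. 1 - norm (q z - 1))"
  have contF: "continuous_on (ball 0 1) F" unfolding F_def
    using holomorphic_on_imp_continuous_on[OF hq] by (intro continuous_intros) auto
  obtain z0 where z0: "z0 \<in> ball 0 1" "z0 \<noteq> 0" "F z0 = 0" and ge: "\<And>z. norm z \<le> norm z0 \<Longrightarrow> F z \<ge> 0"
    by (rule min_fail[OF contF _ z]) (use bad q0 in \<open>auto simp: F_def q_def\<close>)
  define w where "w = (\<lambda>z. q z - 1)"
  have hw: "w holomorphic_on ball 0 1" unfolding w_def by (intro holomorphic_intros hq)
  have dw: "deriv w z0 = deriv q z0"
    unfolding w_def by (rule DERIV_imp_deriv) (auto intro!: derivative_eq_intros holo_deriv_at[OF hq z0(1)])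
  have w0: "w 0 = 0" using q0 by (simp add: w_def)
  have wle: "norm (w z) \<le> 1" if "norm z \<le> norm z0" for z using ge[OF that] by (simp add: F_def w_def)
  have weq: "norm (w z0) = 1" using z0(3) by (simp add: F_def w_def)
  define X where "X = z0 * deriv q z0 * cnj (w z0)"
  have X: "Im X = 0" "Re X \<ge> 1" using jack[OF hw w0 z0(1,2) wle weq] by (simp_all add: X_def dw)
  have wc: "w z0 * cnj (w z0) = 1"
  proof -
    have "w z0 * cnj (w z0) = of_real ((norm (w z0))^2)" by (metis complex_norm_square)
    then show ?thesis using weq by simp
  qed
  have zq: "z0 * deriv q z0 = of_real (Re X) * w z0"
  proof -
    have "X = of_real (Re X)" using X(1) by (simp add: complex_eq_iff)
    then have "of_real (Re X) * w z0 = X * w z0" by simp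
    also have "\<dots> = z0 * deriv q z0 * (w z0 * cnj (w z0))" by (simp add: X_def mult_ac)
    finally have "of_real (Re X) * w z0 = z0 * deriv q z0 * (w z0 * cnj (w z0))" .
    then show ?thesis using wc by simp
  qed
  define k where "k = Re X"
  define A where "A = 1 + z0 * deriv (deriv g) z0 / deriv g z0"
  have qw: "q z0 = 1 + w z0" by (simp add: w_def)
  have E: "q z0 * A = 1 - of_real k * w z0" using dident[OF z0(1)] zq by (simp add: A_def k_def algebra_simps)
  have ReA: "Re A > 0" using conv[OF z0(1)] by (simp add: A_def)
  have "Re (q z0 * A * cnj (q z0)) = (norm (q z0))^2 * Re A"
  proof -
    have "q z0 * cnj (q z0) = of_real ((norm (q z0))^2)" by (metis complex_norm_square)
    then have "q z0 * A * cnj (q z0) = of_real ((norm (q z0))^2) * A"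
      by (metis mult.commute mult.left_commute)
    moreover have "Re (of_real r * A) = r * Re A" for r by simp
    ultimately show ?thesis by metis
  qed
  moreover have "Re (q z0 * A * cnj (q z0)) = (1 - k) * (1 + Re (w z0))"
  proof -
    have "q z0 * A * cnj (q z0) = (1 - of_real k * w z0) * (1 + cnj (w z0))" using E qw by simp
    also have "\<dots> = 1 + cnj (w z0) - of_real k * w z0 - of_real k * (w z0 * cnj (w z0))"
      by (simp add: algebra_simps)
    also have "\<dots> = 1 + cnj (w z0) - of_real k * w z0 - of_real k" using wc by simp
    finally have "q z0 * A * cnj (q z0) = 1 + cnj (w z0) - of_real k * w z0 - of_real k" .
    moreover have "Re (1 + cnj (w z0) - of_real k * w z0 - of_real k) = (1 - k) * (1 + Re (w z0))"
      by (simp add: algebra_simps)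
    ultimately show ?thesis by metis
  qed
  moreover have "Re (w z0) \<ge> -1" using abs_Re_le_cmod[of "w z0"] weq by linarith
  moreover have "k \<ge> 1" using X by (simp add: k_def)
  ultimately have "(norm (q z0))^2 * Re A \<le> 0" by (simp add: mult_nonpos_nonneg)
  with ReA have "(norm (q z0))^2 \<le> 0" by (simp add: mult_le_0_iff)
  then have "q z0 = 0" by simp
  then have "w z0 = -1" using qw by (simp add: add_eq_0_iff)
  with E \<open>q z0 = 0\<close> have "1 + of_real k = (0::complex)" by simp
  then have "1 + k = 0" by (simp add: complex_eq_iff)
  with \<open>k \<ge> 1\<close> show False by simp
qed

lemma q_facts:
  assumes g: "g \<in> classK" and z: "z \<in> ball 0 1"
  shows "divz g z / deriv g z \<noteq> 0" "Re (divz g z / deriv g z) > 0" "divz g z \<noteq> 0"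
    "Re (deriv g z / divz g z) > 1/2"
proof -
  define q where "q = divz g z / deriv g z"
  have n: "norm (q - 1) < 1" using marx_str[OF g z] by (simp add: q_def)
  have g'nz: "deriv g z \<noteq> 0" using g z by (auto simp: classK_def)
  have r: "\<bar>Re (q - 1)\<bar> < 1" using abs_Re_le_cmod[of "q - 1"] n by linarith
  then show "Re (divz g z / deriv g z) > 0" by (simp add: q_def)
  then show qnz: "divz g z / deriv g z \<noteq> 0" by auto
  then show "divz g z \<noteq> 0" by auto
  have "Re (1 / q) > 1/2"
  proof -
    define a where "a = Re q" define b where "b = Im q"
    have ab: "(a - 1)^2 + b^2 < 1" using n unfolding a_def b_def
      by (simp add: cmod_def)
    have pos: "a^2 + b^2 > 0" using qnz unfolding q_def a_def b_def
      by (simp add: complex_eq_iff sum_power2_gt_zero_iff)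
    have "Re (1 / q) = a / (a^2 + b^2)" by (simp add: a_def b_def Re_divide power2_eq_square)
    moreover have "a / (a^2 + b^2) > 1/2" using ab pos by (simp add: field_simps power2_eq_square)
    ultimately show ?thesis by simp
  qed
  then show "Re (deriv g z / divz g z) > 1/2" by (simp add: q_def)
qed

lemma ratio_pos:
  assumes f: "f \<in> classA" and g: "g \<in> classK" and c: "Re c > 0"
    and hyp: "\<And>z. z \<in> ball 0 1 \<Longrightarrow> Re (c * deriv f z / deriv g z) > 0"
    and z: "z \<in> ball 0 1"
  shows "Re (c * (divz f z / divz g z)) > 0"
proof (rule ccontr)
  assume "\<not> ?thesis"
  then have bad: "Re (c * (divz f z / divz g z)) \<le> 0" by simp
  have gA: "g \<in> classA" and g'nz: "\<And>z. z \<in> ball 0 1 \<Longrightarrow> deriv g z \<noteq> 0"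
    using g by (auto simp: classK_def)
  have hg: "g holomorphic_on ball 0 1" "g 0 = 0" "deriv g 0 = 1" using gA by (auto simp: classA_def)
  have hf: "f holomorphic_on ball 0 1" "f 0 = 0" "deriv f 0 = 1" using f by (auto simp: classA_def)
  define q where "q = (\<lambda>z. divz g z / deriv g z)"
  define H where "H = (\<lambda>z. c * (divz f z / divz g z))"
  have cnz: "c \<noteq> 0" using c by auto
  have dgnz: "\<And>z. z \<in> ball 0 1 \<Longrightarrow> divz g z \<noteq> 0" using q_facts[OF g] by blast
  have hH: "H holomorphic_on ball 0 1" unfolding H_def
    by (intro holomorphic_intros divz_holo f gA dgnz)
  have H0: "H 0 = c" by (simp add: H_def divz_def)
  have identf: "f x = g x * (H x / c)" if "x \<in> ball 0 1" for x
  proof -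
    have "f x = x * divz f x" using divz_mult[of f x, OF hf(2)] by simp
    also have "\<dots> = x * divz g x * (divz f x / divz g x)" using dgnz[OF that] by simp
    also have "\<dots> = g x * (H x / c)" using divz_mult[of g x, OF hg(2)] c by (auto simp: H_def)
    finally show ?thesis .
  qed
  have dident: "c * deriv f x / deriv g x = H x + q x * (x * deriv H x)" if x: "x \<in> ball 0 1" for x
  proof -
    have d1: "((\<lambda>x. g x * (H x / c)) has_field_derivative
        (deriv g x * (H x / c) + g x * (deriv H x / c))) (at x)"
      by (auto intro!: derivative_eq_intros holo_deriv_at[OF hg(1) x] holo_deriv_at[OF hH x] simp: cnz field_simps)
    have "(f has_field_derivative (deriv g x * (H x / c) + g x * (deriv H x / c))) (at x)"
      by (rule has_field_derivative_transform_within_open[OF d1, of "ball 0 1"]) (use x identf in auto)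
    then have e: "deriv f x = deriv g x * (H x / c) + g x * (deriv H x / c)"
      using holo_deriv_at[OF hf(1) x] DERIV_unique by blast
    have "g x = x * deriv g x * q x" using g'nz[OF x] divz_mult[of g x, OF hg(2)] by (simp add: q_def)
    with e have "deriv f x = deriv g x * (H x / c) + x * deriv g x * q x * (deriv H x / c)" by simp
    then show ?thesis using g'nz[OF x] c by (auto simp: field_simps)
  qed
  define F where "F = (\<lambda>z. Re (H z))"
  have contF: "continuous_on (ball 0 1) F" unfolding F_def
    using holomorphic_on_imp_continuous_on[OF hH] by (intro continuous_intros) auto
  obtain z0 where z0: "z0 \<in> ball 0 1" "z0 \<noteq> 0" "F z0 = 0" and ge: "\<And>z. norm z \<le> norm z0 \<Longrightarrow> F z \<ge> 0"
    by (rule min_fail[OF contF _ z]) (use bad H0 c in \<open>auto simp: F_def H_def\<close>)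
  have dH: "((\<lambda>z. - H z) has_field_derivative - deriv H z0) (at z0)"
    by (auto intro!: derivative_eq_intros holo_deriv_at[OF hH z0(1)])
  have t: "Re (\<i> * z0 * (- deriv H z0)) = 0"
  proof (rule tang_lemma[OF dH, of 1])
    fix \<theta> :: real
    have "norm (z0 * exp (\<i> * of_real \<theta>)) = norm z0" by (simp add: norm_mult)
    then show "Re (- H (z0 * exp (\<i> * of_real \<theta>))) \<le> Re (- H z0)"
      using ge[of "z0 * exp (\<i> * of_real \<theta>)"] z0(3) by (simp add: F_def)
  qed simp
  have r: "Re (z0 * (- deriv H z0)) \<ge> 0"
  proof (rule rad_lemma[OF dH])
    fix t :: real assume "0 \<le> t" "t < 1"
    then have "norm (of_real t * z0) \<le> norm z0" by (simp add: norm_mult mult_left_le_one_le)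
    then show "Re (- H (of_real t * z0)) \<le> Re (- H z0)"
      using ge[of "of_real t * z0"] z0(3) by (simp add: F_def)
  qed
  define Y where "Y = z0 * deriv H z0"
  have Y: "Im Y = 0" "Re Y \<le> 0" using t r by (simp_all add: Y_def algebra_simps)
  have "Re (q z0) > 0" using q_facts(2)[OF g z0(1)] by (simp add: q_def)
  then have "Re (q z0 * Y) \<le> 0" using Y by (simp add: mult_pos_neg mult_nonneg_nonpos)
  then have "Re (c * deriv f z0 / deriv g z0) \<le> 0"
    using dident[OF z0(1)] z0(3) by (simp add: F_def Y_def)
  with hyp[OF z0(1)] show False by simp
qed



lemma one_minus_disk: "(w::complex) \<in> ball 0 1 \<Longrightarrow> 1 - w \<notin> \<real>\<^sub>\<le>\<^sub>0"
proof -
  assume "w \<in> ball 0 1"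
  then have "Re w < 1" using complex_Re_le_cmod[of w] by auto
  then show ?thesis by (simp add: complex_nonpos_Reals_iff)
qed

lemma one_minus_nz: "(w::complex) \<in> ball 0 1 \<Longrightarrow> 1 - w \<noteq> 0"
  by (auto simp: dist_norm)

definition Kf :: "real \<Rightarrow> (complex \<Rightarrow> complex) \<Rightarrow> complex \<Rightarrow> complex" where
  "Kf \<beta> f w = divz f w / (1 - w) powr of_real \<beta>"

lemma Kf_holo:
  assumes "f \<in> classA" shows "Kf \<beta> f holomorphic_on ball 0 1"
proof -
  have "(\<lambda>w. divz f w / (1 - w) powr of_real \<beta>) holomorphic_on ball 0 1"
  proof (rule holomorphic_on_divide)
    show "divz f holomorphic_on ball 0 1" by (rule divz_holo[OF assms])
    show "(\<lambda>w. (1 - w) powr complex_of_real \<beta>) holomorphic_on ball 0 1"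
    proof (rule holomorphic_on_powr)
      show "\<And>x::complex. x \<in> ball 0 1 \<Longrightarrow> 1 - x \<notin> \<real>\<^sub>\<le>\<^sub>0" using one_minus_disk by blast
    qed (auto intro: holomorphic_intros)
    show "\<And>z. z \<in> ball 0 1 \<Longrightarrow> (1 - z) powr complex_of_real \<beta> \<noteq> 0"
      using one_minus_nz by simp
  qed
  then show ?thesis by (simp add: Kf_def[abs_def])
qed

lemma Cbeta_eq:
  assumes f: "f \<in> classA" and z: "z \<in> ball 0 1"
  shows "Cbeta \<beta> f z = contour_integral (linepath 0 z) (Kf \<beta> f)"
proof (cases "z = 0")
  case True then show ?thesis by (simp add: Cbeta_def)
next
  case False
  show ?thesis unfolding Cbeta_def
  proof (rule contour_integral_spike_finite_simple_path[of "{0}"])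
    show "simple_path (linepath 0 z)" using False by auto
    fix x assume "x \<in> path_image (linepath 0 z) - {0}"
    then show "f x / (x * (1 - x) powr complex_of_real \<beta>) = Kf \<beta> f x"
      by (simp add: Kf_def divz_def)
  qed auto
qed

lemma Cbeta_deriv:
  assumes f: "f \<in> classA" and z: "z \<in> ball 0 1"
  shows "(Cbeta \<beta> f has_field_derivative Kf \<beta> f z) (at z)"
proof -
  have hK: "Kf \<beta> f holomorphic_on ball 0 1" by (rule Kf_holo[OF f])
  have "((\<lambda>x. contour_integral (linepath 0 x) (Kf \<beta> f)) has_field_derivative Kf \<beta> f z) (at z within ball 0 1)"
  proof (rule triangle_contour_integrals_convex_primitive)
    show "continuous_on (ball 0 1) (Kf \<beta> f)" using hK by (rule holomorphic_on_imp_continuous_on)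
    fix b c assume bc: "b \<in> ball (0::complex) 1" "c \<in> ball (0::complex) 1"
    have "convex hull {0, b, c} \<subseteq> ball 0 1"
      using hull_minimal[of "{0,b,c}" "ball (0::complex) 1" convex] bc by simp
    then have "Kf \<beta> f holomorphic_on convex hull {0, b, c}" using hK by (rule holomorphic_on_subset[rotated])
    then show "contour_integral (linepath 0 b) (Kf \<beta> f) + contour_integral (linepath b c) (Kf \<beta> f) +
          contour_integral (linepath c 0) (Kf \<beta> f) = 0"
      by (rule has_chain_integral_chain_integral3[OF Cauchy_theorem_triangle])
  next
    show "0 \<in> ball (0::complex) 1" by simp
  next
    show "convex (ball (0::complex) 1)" by (rule convex_ball)
  next
    show "z \<in> ball 0 1" by (rule z)
  qed
  then have "((\<lambda>x. contour_integral (linepath 0 x) (Kf \<beta> f)) has_field_derivative Kf \<beta> f z) (at z)"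
    unfolding at_within_open[OF z open_ball] .
  then show ?thesis
    by (rule has_field_derivative_transform_within_open[of _ _ _ "ball 0 1"]) (use z Cbeta_eq[OF f] in auto)
qed

lemma Cbeta_holo: "f \<in> classA \<Longrightarrow> Cbeta \<beta> f holomorphic_on ball 0 1"
  unfolding holomorphic_on_open[OF open_ball] using Cbeta_deriv by blast

lemma Cbeta_derivs:
  assumes f: "f \<in> classA" and z: "z \<in> ball 0 1"
  shows "deriv (Cbeta \<beta> f) z = Kf \<beta> f z" "deriv (deriv (Cbeta \<beta> f)) z = deriv (Kf \<beta> f) z"
proof -
  show "deriv (Cbeta \<beta> f) z = Kf \<beta> f z" using Cbeta_deriv[OF f z] by (rule DERIV_imp_deriv)
  have "(Kf \<beta> f has_field_derivative deriv (Kf \<beta> f) z) (at z)"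
    by (rule holo_deriv_at[OF Kf_holo[OF f] z])
  then have "(deriv (Cbeta \<beta> f) has_field_derivative deriv (Kf \<beta> f) z) (at z)"
  proof (rule has_field_derivative_transform_within_open[of _ _ _ "ball 0 1"])
    fix x :: complex assume "x \<in> ball 0 1"
    then show "Kf \<beta> f x = deriv (Cbeta \<beta> f) x" using DERIV_imp_deriv[OF Cbeta_deriv[OF f]] by simp
  qed (use z in auto)
  then show "deriv (deriv (Cbeta \<beta> f)) z = deriv (Kf \<beta> f) z" by (rule DERIV_imp_deriv)
qed

lemma Cbeta_classA:
  assumes f: "f \<in> classA" shows "Cbeta \<beta> f \<in> classA"
proof -
  have "Cbeta \<beta> f 0 = 0" by (simp add: Cbeta_def)
  moreover have "deriv (Cbeta \<beta> f) 0 = 1" using Cbeta_derivs(1)[OF f, of 0]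
    by (simp add: Kf_def divz_def)
  ultimately show ?thesis using Cbeta_holo[OF f] by (simp add: classA_def)
qed

lemma re_z_div: assumes "(z::complex) \<in> ball 0 1" shows "Re (z / (1 - z)) \<ge> -1/2"
proof -
  define a where "a = Re z" define b where "b = Im z"
  have ab: "a^2 + b^2 < 1" using assms unfolding a_def b_def
    by (simp add: cmod_def dist_norm norm_minus_commute)
  have a1: "a < 1" using complex_Re_le_cmod[of z] assms by (auto simp: a_def)
  have den: "(1 - a)^2 + b^2 > 0" using a1 by (simp add: add_pos_nonneg)
  have "Re (z / (1 - z)) = (a * (1 - a) - b * b) / ((1 - a)^2 + b^2)"
    by (simp add: Re_divide a_def b_def cmod_power2 algebra_simps power2_eq_square)
  moreover have "(a * (1 - a) - b * b) / ((1 - a)^2 + b^2) \<ge> -1/2"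
    using den ab by (simp add: field_simps power2_eq_square)
  ultimately show ?thesis by simp
qed

lemma re_ofreal_mult: "Re (complex_of_real r * w) = r * Re w" by simp

lemma Kf_logderiv:
  assumes g: "g \<in> classK" and z: "z \<in> ball 0 1"
  shows "1 + z * deriv (Kf \<beta> g) z / Kf \<beta> g z = deriv g z / divz g z + of_real \<beta> * (z / (1 - z))"
    and "Kf \<beta> g z \<noteq> 0"
proof -
  have gA: "g \<in> classA" using g by (simp add: classK_def)
  have hg: "g holomorphic_on ball 0 1" "g 0 = 0" "deriv g 0 = 1" using gA by (auto simp: classA_def)
  have hphi: "divz g holomorphic_on ball 0 1" by (rule divz_holo[OF gA])
  have phinz: "divz g z \<noteq> 0" using q_facts(3)[OF g z] .
  define s where "s = complex_of_real \<beta>"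
  define P where "P = (\<lambda>w. (1 - w) powr s)"
  have omz: "1 - z \<noteq> 0" using one_minus_nz[OF z] .
  have Pnz: "P z \<noteq> 0" using omz by (simp add: P_def)
  show Knz: "Kf \<beta> g z \<noteq> 0" using phinz Pnz by (simp add: Kf_def P_def s_def)
  have dP: "(P has_field_derivative (s * (1 - z) powr (s - 1) * (- 1))) (at z)"
  proof -
    have d1: "((\<lambda>w. w powr s) has_field_derivative s * (1 - z) powr (s - 1)) (at (1 - z))"
      by (rule has_field_derivative_powr[OF one_minus_disk[OF z]])
    have d2: "((\<lambda>w. 1 - w) has_field_derivative -1) (at z)" by (auto intro!: derivative_eq_intros)
    show ?thesis unfolding P_def
      using DERIV_chain2[of "\<lambda>w. w powr s" _ "\<lambda>w. 1 - w" z, OF d1 d2] by simp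
  qed
  have Pd: "(1 - z) powr (s - 1) = P z / (1 - z)"
    using omz by (simp add: powr_diff P_def)
  have dK: "(Kf \<beta> g has_field_derivative
      (deriv (divz g) z * P z - divz g z * (s * (1 - z) powr (s - 1) * (- 1))) / (P z * P z)) (at z)"
  proof -
    have "((\<lambda>w. divz g w / P w) has_field_derivative
      (deriv (divz g) z * P z - divz g z * (s * (1 - z) powr (s - 1) * (- 1))) / (P z * P z)) (at z)"
      by (rule DERIV_divide[OF holo_deriv_at[OF hphi z] dP Pnz])
    then show ?thesis by (simp add: Kf_def[abs_def] P_def s_def)
  qed
  have phid: "z * deriv (divz g) z = deriv g z - divz g z"
  proof -
    have d1: "((\<lambda>w. w * divz g w) has_field_derivative (divz g z + z * deriv (divz g) z)) (at z)"
      by (auto intro!: derivative_eq_intros holo_deriv_at[OF hphi z])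
    have "(g has_field_derivative (divz g z + z * deriv (divz g) z)) (at z)"
      by (rule has_field_derivative_transform_within_open[OF d1, of "ball 0 1"]) (use z divz_mult[of g, OF hg(2)] in auto)
    then have "deriv g z = divz g z + z * deriv (divz g) z"
      using holo_deriv_at[OF hg(1) z] DERIV_unique by blast
    then show ?thesis by simp
  qed
  have Kz: "Kf \<beta> g z = divz g z / P z" by (simp add: Kf_def P_def s_def)
  have "deriv (Kf \<beta> g) z = (deriv (divz g) z * P z - divz g z * (s * (1 - z) powr (s - 1) * (- 1))) / (P z * P z)"
    by (rule DERIV_imp_deriv[OF dK])
  also have "\<dots> = deriv (divz g) z / P z + s * divz g z / ((1 - z) * P z)"
    unfolding Pd using Pnz omz by (simp add: field_simps)
  finally have dK': "deriv (Kf \<beta> g) z = deriv (divz g) z / P z + s * divz g z / ((1 - z) * P z)" .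
  have "1 + z * deriv (Kf \<beta> g) z / Kf \<beta> g z = 1 + z * deriv (divz g) z / divz g z + s * (z / (1 - z))"
    using Pnz phinz omz unfolding Kz dK' by (simp add: field_simps)
  also have "\<dots> = deriv g z / divz g z + s * (z / (1 - z))"
    using phid phinz by (simp add: field_simps)
  finally show "1 + z * deriv (Kf \<beta> g) z / Kf \<beta> g z = deriv g z / divz g z + of_real \<beta> * (z / (1 - z))"
    by (simp add: s_def)
qed

lemma Cbeta_classK:
  assumes g: "g \<in> classK" and b: "0 \<le> \<beta>" "\<beta> \<le> 1"
  shows "Cbeta \<beta> g \<in> classK"
proof -
  have gA: "g \<in> classA" using g by (simp add: classK_def)
  have "deriv (Cbeta \<beta> g) z \<noteq> 0 \<and> Re (1 + z * deriv (deriv (Cbeta \<beta> g)) z / deriv (Cbeta \<beta> g) z) > 0"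
    if z: "z \<in> ball 0 1" for z
  proof -
    have e: "1 + z * deriv (deriv (Cbeta \<beta> g)) z / deriv (Cbeta \<beta> g) z
          = deriv g z / divz g z + of_real \<beta> * (z / (1 - z))"
      using Kf_logderiv(1)[OF g z] Cbeta_derivs[OF gA z] by simp
    have r1: "Re (deriv g z / divz g z) > 1/2" by (rule q_facts(4)[OF g z])
    have r2: "Re (z / (1 - z)) \<ge> -1/2" by (rule re_z_div[OF z])
    have "\<beta> * Re (z / (1 - z)) \<ge> \<beta> * (-1/2)" using r2 b by (intro mult_left_mono) auto
    moreover have "\<beta> * (-1/2) \<ge> -1/2" using b by simp
    moreover have "Re (of_real \<beta> * (z / (1 - z))) = \<beta> * Re (z / (1 - z))" by (rule re_ofreal_mult)
    ultimately have "Re (of_real \<beta> * (z / (1 - z))) \<ge> -1/2" by linarith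
    with r1 have "Re (1 + z * deriv (deriv (Cbeta \<beta> g)) z / deriv (Cbeta \<beta> g) z) > 0"
      unfolding e by simp
    moreover have "deriv (Cbeta \<beta> g) z \<noteq> 0" using Kf_logderiv(2)[OF g z] Cbeta_derivs(1)[OF gA z] by simp
    ultimately show ?thesis by simp
  qed
  then show ?thesis using Cbeta_classA[OF gA] by (simp add: classK_def)
qed

theorem theorem2p16:
  fixes \<beta> :: real and f :: "complex \<Rightarrow> complex"
  assumes "0 \<le> \<beta>" and "\<beta> \<le> 1" and "f \<in> classC"
  shows "Cbeta \<beta> f \<in> classC"
proof -
  obtain g \<alpha> where fA: "f \<in> classA" and g: "g \<in> classK" and al: "-(pi/2) < \<alpha>" "\<alpha> < pi/2"
    and hyp: "\<And>z. z \<in> ball 0 1 \<Longrightarrow> Re (exp (\<i> * of_real \<alpha>) * deriv f z / deriv g z) > 0"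
    using assms(3) unfolding classC_def by blast
  have gA: "g \<in> classA" using g by (simp add: classK_def)
  have c: "Re (exp (\<i> * of_real \<alpha>)) > 0" using al by (simp add: Re_exp cos_gt_zero_pi)
  have G: "Cbeta \<beta> g \<in> classK" by (rule Cbeta_classK[OF g assms(1,2)])
  have "Re (exp (\<i> * of_real \<alpha>) * deriv (Cbeta \<beta> f) z / deriv (Cbeta \<beta> g) z) > 0"
    if z: "z \<in> ball 0 1" for z
  proof -
    have Pnz: "(1 - z) powr complex_of_real \<beta> \<noteq> 0" using one_minus_nz[OF z] by simp
    have "deriv (Cbeta \<beta> f) z / deriv (Cbeta \<beta> g) z = divz f z / divz g z"
    proof -
      have e1: "deriv (Cbeta \<beta> f) z = divz f z / (1 - z) powr complex_of_real \<beta>"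
        using Cbeta_derivs(1)[OF fA z, where \<beta>=\<beta>] by (simp add: Kf_def)
      have e2: "deriv (Cbeta \<beta> g) z = divz g z / (1 - z) powr complex_of_real \<beta>"
        using Cbeta_derivs(1)[OF gA z, where \<beta>=\<beta>] by (simp add: Kf_def)
      show ?thesis unfolding e1 e2 using Pnz q_facts(3)[OF g z] by (simp add: field_simps)
    qed
    then have "exp (\<i> * of_real \<alpha>) * deriv (Cbeta \<beta> f) z / deriv (Cbeta \<beta> g) z
        = exp (\<i> * of_real \<alpha>) * (divz f z / divz g z)" by (metis times_divide_eq_right)
    moreover have "Re (exp (\<i> * of_real \<alpha>) * (divz f z / divz g z)) > 0"
      by (rule ratio_pos[OF fA g c hyp z])
    ultimately show ?thesis by simp
  qed
  then show ?thesis unfolding classC_def using Cbeta_classA[OF fA] G al by blast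
qed

end
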